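(* Let $D$ be an integral domain and let $M$ be a torsion-free $D$-module which is a $w$-module. Then the following are equivalent: (1) $M$ is an SM-module; (2) $M$ is a $P$-SM-module for all prime $w$-ideals $P$ of $D$; (3) $M$ is an $\mathfrak{m}$-SM-module for all maximal $w$-ideals $\mathfrak{m}$ of $D$.
   Context: Let $K$ be the quotient field of $D$; $I_v=(I^{-1})^{-1}$ with $I^{-1}=\{a\in K\mid aI\subseteq D\}$; $\mathrm{GV}(D)$ is the set of finitely generated ideals $J$ with $J_v=D$. For a torsion-free module $N$, $N_w=\{x\in N\otimes K\mid xJ\subseteq N\text{ for some }J\in\mathrm{GV}(D)\}$; $N$ is a $w$-module if $N_w=N$; a $w$-ideal is an ideal that is a $w$-module; maximal $w$-ideals are proper $w$-ideals maximal among proper $w$-ideals. A $w$-module $M$ is an SM-module (strong Mori module) if it satisfies the ascending chain condition on $w$-submodules, equivalently every $w$-submodule $L$ is $w$-finite ($L=F_w$ for some finitely generated $F$). For a multiplicative set $S$, a submodule $N$ is $S$-$w$-finite if there exist $s\in S$ and a finitely generated submodule $F$ of $M$ with $Ns\subseteq F_w\subseteq N_w$, and $M$ is an $S$-SM-module if every $w$-submodule is $S$-$w$-finite. For a prime ideal $P$, $M$ is a $P$-SM-module if it is a $(D\setminus P)$-SM-module. *)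

theory Defs
  imports Complex_Main
begin

(* Setting: the field K is a type 'k; D :: 'k set is a subring whose quotient field is all of K.
   A torsion-free D-module M is represented as a D-submodule of a K-vector space V
   (scalar multiplication sc); then M \<otimes> K is identified with the K-span of M in V. *)

definition domain_with_qf :: "'k::field set \<Rightarrow> bool" where
  "domain_with_qf D \<longleftrightarrow> 0 \<in> D \<and> 1 \<in> D \<and>
     (\<forall>a\<in>D. \<forall>b\<in>D. a + b \<in> D \<and> a - b \<in> D \<and> a * b \<in> D) \<and>
     (\<forall>x. \<exists>a\<in>D. \<exists>b\<in>D. b \<noteq> 0 \<and> x = a / b)"

definition lspan :: "'k set \<Rightarrow> ('k \<Rightarrow> 'v::ab_group_add \<Rightarrow> 'v) \<Rightarrow> 'v set \<Rightarrow> 'v set" where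
  "lspan R sc S = {\<Sum>x\<in>F. sc (c x) x | F c. finite F \<and> F \<subseteq> S \<and> (\<forall>x\<in>F. c x \<in> R)}"

definition submodule :: "'k set \<Rightarrow> ('k \<Rightarrow> 'v::ab_group_add \<Rightarrow> 'v) \<Rightarrow> 'v set \<Rightarrow> bool" where
  "submodule D sc N \<longleftrightarrow> 0 \<in> N \<and> (\<forall>x\<in>N. \<forall>y\<in>N. x + y \<in> N) \<and> (\<forall>a\<in>D. \<forall>x\<in>N. sc a x \<in> N)"

definition is_ideal :: "'k::field set \<Rightarrow> 'k set \<Rightarrow> bool" where
  "is_ideal D I \<longleftrightarrow> I \<subseteq> D \<and> submodule D (*) I"

definition frac_inv :: "'k::field set \<Rightarrow> 'k set \<Rightarrow> 'k set" where
  "frac_inv D I = {a. \<forall>x\<in>I. a * x \<in> D}"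

definition v_closure :: "'k::field set \<Rightarrow> 'k set \<Rightarrow> 'k set" where
  "v_closure D I = frac_inv D (frac_inv D I)"

definition GV :: "'k::field set \<Rightarrow> 'k set set" where
  "GV D = {J. is_ideal D J \<and> (\<exists>F. finite F \<and> F \<subseteq> D \<and> J = lspan D (*) F) \<and> v_closure D J = D}"

definition w_closure :: "'k::field set \<Rightarrow> ('k \<Rightarrow> 'v::ab_group_add \<Rightarrow> 'v) \<Rightarrow> 'v set \<Rightarrow> 'v set" where
  "w_closure D sc N = {x \<in> lspan UNIV sc N. \<exists>J\<in>GV D. \<forall>j\<in>J. sc j x \<in> N}"

definition w_module :: "'k::field set \<Rightarrow> ('k \<Rightarrow> 'v::ab_group_add \<Rightarrow> 'v) \<Rightarrow> 'v set \<Rightarrow> bool" where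
  "w_module D sc N \<longleftrightarrow> w_closure D sc N = N"

definition w_submodule :: "'k::field set \<Rightarrow> ('k \<Rightarrow> 'v::ab_group_add \<Rightarrow> 'v) \<Rightarrow> 'v set \<Rightarrow> 'v set \<Rightarrow> bool" where
  "w_submodule D sc M L \<longleftrightarrow> submodule D sc L \<and> L \<subseteq> M \<and> w_module D sc L"

definition SM_module :: "'k::field set \<Rightarrow> ('k \<Rightarrow> 'v::ab_group_add \<Rightarrow> 'v) \<Rightarrow> 'v set \<Rightarrow> bool" where
  "SM_module D sc M \<longleftrightarrow> w_module D sc M \<and>
     (\<forall>f :: nat \<Rightarrow> 'v set. (\<forall>n. w_submodule D sc M (f n)) \<and> (\<forall>n. f n \<subseteq> f (Suc n)) \<longrightarrow>
        (\<exists>n. \<forall>m\<ge>n. f m = f n))"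

definition S_w_finite :: "'k::field set \<Rightarrow> ('k \<Rightarrow> 'v::ab_group_add \<Rightarrow> 'v) \<Rightarrow> 'k set \<Rightarrow> 'v set \<Rightarrow> 'v set \<Rightarrow> bool" where
  "S_w_finite D sc S M N \<longleftrightarrow> (\<exists>s\<in>S. \<exists>F0. finite F0 \<and> F0 \<subseteq> M \<and>
      sc s ` N \<subseteq> w_closure D sc (lspan D sc F0) \<and>
      w_closure D sc (lspan D sc F0) \<subseteq> w_closure D sc N)"

definition S_SM_module :: "'k::field set \<Rightarrow> ('k \<Rightarrow> 'v::ab_group_add \<Rightarrow> 'v) \<Rightarrow> 'k set \<Rightarrow> 'v set \<Rightarrow> bool" where
  "S_SM_module D sc S M \<longleftrightarrow> (\<forall>L. w_submodule D sc M L \<longrightarrow> S_w_finite D sc S M L)"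

definition P_SM_module :: "'k::field set \<Rightarrow> ('k \<Rightarrow> 'v::ab_group_add \<Rightarrow> 'v) \<Rightarrow> 'k set \<Rightarrow> 'v set \<Rightarrow> bool" where
  "P_SM_module D sc P M \<longleftrightarrow> S_SM_module D sc (D - P) M"

definition w_ideal :: "'k::field set \<Rightarrow> 'k set \<Rightarrow> bool" where
  "w_ideal D I \<longleftrightarrow> is_ideal D I \<and> w_module D (*) I"

definition prime_w_ideal :: "'k::field set \<Rightarrow> 'k set \<Rightarrow> bool" where
  "prime_w_ideal D P \<longleftrightarrow> w_ideal D P \<and> P \<noteq> D \<and>
     (\<forall>a\<in>D. \<forall>b\<in>D. a * b \<in> P \<longrightarrow> a \<in> P \<or> b \<in> P)"

definition maximal_w_ideal :: "'k::field set \<Rightarrow> 'k set \<Rightarrow> bool" where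
  "maximal_w_ideal D m \<longleftrightarrow> w_ideal D m \<and> m \<noteq> D \<and>
     (\<forall>I. w_ideal D I \<and> I \<noteq> D \<and> m \<subseteq> I \<longrightarrow> I = m)"

end

theory Submission
  imports Defs
begin


lemma vs_facts:
  assumes "vector_space sc"
  shows "sc a (x + y) = sc a x + sc a y" "sc (a + b) x = sc a x + sc b x"
    "sc a (sc b x) = sc (a * b) x" "sc 1 x = x" "sc 0 x = 0" "sc a 0 = 0"
    "sc a (sum f A) = (\<Sum>i\<in>A. sc a (f i))"
  using assms module_iff_vector_space[of sc]
  by (auto simp: vector_space.vector_space_assms module.scale_zero_left module.scale_zero_right
      module.scale_sum_right)

lemma vs_mult: "vector_space ((*) :: 'k::field \<Rightarrow> 'k \<Rightarrow> 'k)"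
  by unfold_locales (simp_all add: algebra_simps)

lemma D_props:
  assumes "domain_with_qf D"
  shows "0 \<in> D" "1 \<in> D" "a \<in> D \<Longrightarrow> b \<in> D \<Longrightarrow> a + b \<in> D"
    "a \<in> D \<Longrightarrow> b \<in> D \<Longrightarrow> a * b \<in> D"
  using assms unfolding domain_with_qf_def by auto

lemma sub_sum:
  assumes N: "submodule R sc N" and "finite F" "\<forall>x\<in>F. c x \<in> R \<and> v x \<in> N"
  shows "(\<Sum>x\<in>F. sc (c x) (v x)) \<in> N"
  using assms(2,3)
proof (induction F rule: finite_induct)
  case empty then show ?case using N unfolding submodule_def by simp
next
  case (insert x F)
  have a: "sc (c x) (v x) \<in> N" using insert.prems N unfolding submodule_def by blast
  have b: "(\<Sum>x\<in>F. sc (c x) (v x)) \<in> N" using insert.IH insert.prems by blast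
  have "sc (c x) (v x) + (\<Sum>x\<in>F. sc (c x) (v x)) \<in> N" using a b N unfolding submodule_def by blast
  then show ?case using insert.hyps by simp
qed

lemma lspan_least:
  assumes "submodule R sc N" "S \<subseteq> N"
  shows "lspan R sc S \<subseteq> N"
proof
  fix x assume "x \<in> lspan R sc S"
  then obtain F c where F: "x = (\<Sum>y\<in>F. sc (c y) y)" "finite F" "F \<subseteq> S" "\<forall>y\<in>F. c y \<in> R"
    unfolding lspan_def by blast
  have "\<forall>y\<in>F. c y \<in> R \<and> y \<in> N" using F assms(2) by blast
  from sub_sum[OF assms(1) F(2) this] show "x \<in> N" using F(1) by simp
qed

lemma lspan_sup:
  assumes "vector_space sc" "1 \<in> R"
  shows "S \<subseteq> lspan R sc S"
proof
  fix x assume "x \<in> S"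
  then have "x = (\<Sum>y\<in>{x}. sc ((\<lambda>_. 1) y) y)" using vs_facts[OF assms(1)] by simp
  moreover have "finite {x} \<and> {x} \<subseteq> S \<and> (\<forall>y\<in>{x}. (\<lambda>_. 1) y \<in> R)" using \<open>x \<in> S\<close> assms(2) by simp
  ultimately show "x \<in> lspan R sc S" unfolding lspan_def mem_Collect_eq
    by (intro exI[of _ "{x}"] exI[of _ "\<lambda>_. 1"]) blast
qed

lemma lspan_mono: "S \<subseteq> T \<Longrightarrow> lspan R sc S \<subseteq> lspan R sc T"
  unfolding lspan_def by blast

lemma lspan_finite: "x \<in> lspan R sc S \<Longrightarrow> \<exists>F. finite F \<and> F \<subseteq> S \<and> x \<in> lspan R sc F"
  unfolding lspan_def by blast

lemma sum_ext0:
  assumes "finite F" "F1 \<subseteq> F"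
  shows "(\<Sum>x\<in>F. if x \<in> F1 then g x else 0) = sum g F1"
  using assms by (simp add: sum.If_cases Int_absorb1)

lemma lspan_sub:
  assumes vs: "vector_space sc" and R: "0 \<in> R" "\<And>a b. a \<in> R \<Longrightarrow> b \<in> R \<Longrightarrow> a + b \<in> R"
    "\<And>a b. a \<in> R \<Longrightarrow> b \<in> R \<Longrightarrow> a * b \<in> R"
  shows "submodule R sc (lspan R sc S)"
  unfolding submodule_def
proof (intro conjI ballI)
  show "0 \<in> lspan R sc S" unfolding lspan_def by (rule CollectI, rule exI[of _ "{}"]) auto
next
  fix u v assume "u \<in> lspan R sc S" "v \<in> lspan R sc S"
  then obtain F1 c1 F2 c2 where u: "u = (\<Sum>x\<in>F1. sc (c1 x) x)" "finite F1" "F1 \<subseteq> S" "\<forall>x\<in>F1. c1 x \<in> R"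
    and v: "v = (\<Sum>x\<in>F2. sc (c2 x) x)" "finite F2" "F2 \<subseteq> S" "\<forall>x\<in>F2. c2 x \<in> R"
    unfolding lspan_def by blast
  define F where "F = F1 \<union> F2"
  define c where "c x = (if x \<in> F1 then c1 x else 0) + (if x \<in> F2 then c2 x else 0)" for x
  have fF: "finite F" using u v F_def by simp
  have "(\<Sum>x\<in>F. sc (c x) x) = (\<Sum>x\<in>F. if x \<in> F1 then sc (c1 x) x else 0) + (\<Sum>x\<in>F. if x \<in> F2 then sc (c2 x) x else 0)"
    unfolding sum.distrib[symmetric] c_def by (rule sum.cong) (auto simp: vs_facts[OF vs])
  also have "\<dots> = u + v" using sum_ext0[OF fF, of F1 "\<lambda>x. sc (c1 x) x"] sum_ext0[OF fF, of F2 "\<lambda>x. sc (c2 x) x"] u v F_def by simp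
  finally have "u + v = (\<Sum>x\<in>F. sc (c x) x)" by simp
  moreover have "\<forall>x\<in>F. c x \<in> R" using u v R unfolding c_def by auto
  ultimately show "u + v \<in> lspan R sc S" unfolding lspan_def using fF u v F_def by blast
next
  fix a u assume a: "a \<in> R" and "u \<in> lspan R sc S"
  then obtain F1 c1 where u: "u = (\<Sum>x\<in>F1. sc (c1 x) x)" "finite F1" "F1 \<subseteq> S" "\<forall>x\<in>F1. c1 x \<in> R"
    unfolding lspan_def by blast
  have "sc a u = (\<Sum>x\<in>F1. sc (a * c1 x) x)" using u by (simp add: vs_facts[OF vs])
  moreover have "\<forall>x\<in>F1. a * c1 x \<in> R" using u a R by auto
  ultimately show "sc a u \<in> lspan R sc S" unfolding lspan_def mem_Collect_eq using u
    by (intro exI[of _ F1] exI[of _ "\<lambda>x. a * c1 x"]) blast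
qed

lemma submodule_weaken: "submodule R sc N \<Longrightarrow> R' \<subseteq> R \<Longrightarrow> submodule R' sc N"
  unfolding submodule_def by blast

lemma lspan_span:
  assumes "vector_space sc"
  shows "lspan UNIV sc (lspan UNIV sc S) = lspan UNIV sc S"
proof -
  have "submodule UNIV sc (lspan UNIV sc S)" using lspan_sub[OF assms] by auto
  then have "lspan UNIV sc (lspan UNIV sc S) \<subseteq> lspan UNIV sc S" by (rule lspan_least) simp
  moreover have "lspan UNIV sc S \<subseteq> lspan UNIV sc (lspan UNIV sc S)" by (rule lspan_sup[OF assms]) simp
  ultimately show ?thesis by blast
qed



lemma fi_anti: "A \<subseteq> B \<Longrightarrow> frac_inv D B \<subseteq> frac_inv D A"
  unfolding frac_inv_def by blast

lemma fi_ext: "A \<subseteq> frac_inv D (frac_inv D (A :: 'k::field set))"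
  unfolding frac_inv_def by (auto simp: mult.commute)

lemma fi_triple: "frac_inv D (frac_inv D (frac_inv D (A :: 'k::field set))) = frac_inv D A"
  by (rule subset_antisym[OF fi_anti[OF fi_ext] fi_ext])

lemma fi_D: assumes "domain_with_qf D" shows "frac_inv D D = D"
proof
  show "frac_inv D D \<subseteq> D"
  proof
    fix a assume "a \<in> frac_inv D D"
    then have "a * 1 \<in> D" unfolding frac_inv_def using D_props(2)[OF assms] by blast
    then show "a \<in> D" by simp
  qed
  show "D \<subseteq> frac_inv D D" unfolding frac_inv_def using D_props[OF assms] by auto
qed

lemma GV_fi: assumes dom: "domain_with_qf D" and "J \<in> GV D" shows "frac_inv D J = D"
proof -
  have "v_closure D J = D" using assms unfolding GV_def by blast
  then have "frac_inv D (frac_inv D (frac_inv D J)) = frac_inv D D" unfolding v_closure_def by simp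
  then show ?thesis using fi_triple[of D J] fi_D[OF dom] by simp
qed

lemma GV_D: fixes D :: "'k::field set" assumes "domain_with_qf D" shows "D \<in> GV D"
proof -
  note Dp = D_props[OF assms]
  have sD: "submodule D (*) D" unfolding submodule_def using Dp by auto
  have "lspan D (*) {1} = D"
  proof
    show "lspan D (*) {1} \<subseteq> D" using lspan_least[OF sD] Dp by auto
    show "D \<subseteq> lspan D (*) {1}"
    proof
      fix d assume "d \<in> D"
      then have "d = (\<Sum>x\<in>{1}. (\<lambda>_. d) x * x)" by simp
      then show "d \<in> lspan D (*) {1}" unfolding lspan_def mem_Collect_eq using \<open>d \<in> D\<close>
        by (intro exI[of _ "{1}"] exI[of _ "\<lambda>_. d"]) auto
    qed
  qed
  moreover have "v_closure D D = D" unfolding v_closure_def using fi_D[OF assms] by simp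
  moreover have "finite {1::'k}" "{1} \<subseteq> D" using Dp by auto
  ultimately have "\<exists>F. finite F \<and> F \<subseteq> D \<and> D = lspan D (*) F" by (intro exI[of _ "{1}"]) simp
  then show ?thesis unfolding GV_def is_ideal_def using sD \<open>v_closure D D = D\<close> by simp
qed

lemma D_sub: assumes "domain_with_qf D" shows "submodule D (*) D"
  unfolding submodule_def using D_props[OF assms] by auto

lemma lspanD_sub: assumes "domain_with_qf D" shows "submodule D (*) (lspan D (*) (S::'k::field set))"
  by (rule lspan_sub[OF vs_mult D_props(1)[OF assms] D_props(3)[OF assms] D_props(4)[OF assms]])

lemma GV_props:
  assumes "J \<in> GV D"
  shows "J \<subseteq> D" "submodule D (*) J" "\<exists>G. finite G \<and> G \<subseteq> D \<and> J = lspan D (*) G"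
  using assms unfolding GV_def is_ideal_def by blast+

lemma fi_lspan:
  assumes "domain_with_qf D"
  shows "a \<in> frac_inv D (lspan D (*) G) \<longleftrightarrow> (\<forall>g\<in>G. a * g \<in> D)"
proof
  assume "a \<in> frac_inv D (lspan D (*) G)"
  then show "\<forall>g\<in>G. a * g \<in> D" using lspan_sup[OF vs_mult, of D G] D_props[OF assms]
    unfolding frac_inv_def by blast
next
  assume h: "\<forall>g\<in>G. a * g \<in> D"
  have "submodule D (*) {x. a * x \<in> D}" unfolding submodule_def
  proof (intro conjI ballI)
    show "0 \<in> {x. a * x \<in> D}" using D_props(1)[OF assms] by simp
    fix x y assume "x \<in> {x. a * x \<in> D}" "y \<in> {x. a * x \<in> D}"
    then show "x + y \<in> {x. a * x \<in> D}" using D_props(3)[OF assms] by (simp add: distrib_left)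
  next
    fix d x assume "d \<in> D" "x \<in> {x. a * x \<in> D}"
    then have "d * (a * x) \<in> D" using D_props(4)[OF assms] by simp
    then show "d * x \<in> {x. a * x \<in> D}" by (simp add: mult.left_commute)
  qed
  then have "lspan D (*) G \<subseteq> {x. a * x \<in> D}" using lspan_least h by blast
  then show "a \<in> frac_inv D (lspan D (*) G)" unfolding frac_inv_def by blast
qed

lemma GV_prod:
  assumes dom: "domain_with_qf D" and J1: "J1 \<in> GV D" "J1 = lspan D (*) G1" "finite G1" "G1 \<subseteq> D"
    and J2: "J2 \<in> GV D"
  shows "\<exists>J\<in>GV D. J \<subseteq> J1 \<and> J \<subseteq> J2 \<and>
     (\<forall>P. submodule D (*) P \<longrightarrow> (\<forall>a\<in>G1. \<forall>b\<in>J2. a * b \<in> P) \<longrightarrow> J \<subseteq> P)"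
proof -
  note Dp = D_props[OF dom]
  obtain G2 where G2: "finite G2" "G2 \<subseteq> D" "J2 = lspan D (*) G2" using GV_props[OF J2] by blast
  define H where "H = {a * b | a b. a \<in> G1 \<and> b \<in> G2}"
  define J where "J = lspan D (*) H"
  have "H = (\<lambda>(a,b). a * b) ` (G1 \<times> G2)" unfolding H_def by auto
  then have fH: "finite H" using J1(3) G2(1) by simp
  have HD: "H \<subseteq> D" unfolding H_def using J1(4) G2(2) Dp(4) by blast
  have G2J2: "G2 \<subseteq> J2" using G2 lspan_sup[OF vs_mult, of D G2] Dp by blast
  have G1J1: "G1 \<subseteq> J1" using J1 lspan_sup[OF vs_mult, of D G1] Dp by blast
  have JP: "J \<subseteq> P" if P: "submodule D (*) P" "\<forall>a\<in>G1. \<forall>b\<in>J2. a * b \<in> P" for P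
  proof -
    have "H \<subseteq> P"
    proof
      fix h assume "h \<in> H"
      then obtain a b where "h = a * b" "a \<in> G1" "b \<in> G2" unfolding H_def by blast
      then show "h \<in> P" using P(2) G2J2 by blast
    qed
    then show ?thesis unfolding J_def by (rule lspan_least[OF P(1)])
  qed
  have J1J2: "J1 \<subseteq> D" "J2 \<subseteq> D" "submodule D (*) J1" "submodule D (*) J2" using GV_props J1(1) J2 by auto
  have "J \<subseteq> J1"
  proof (rule JP[OF J1J2(3)], intro ballI)
    fix a b assume "a \<in> G1" "b \<in> J2"
    then have "b * a \<in> J1" using G1J1 J1J2 unfolding submodule_def by blast
    then show "a * b \<in> J1" by (simp add: mult.commute)
  qed
  moreover have "J \<subseteq> J2"
  proof (rule JP[OF J1J2(4)], intro ballI)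
    fix a b assume "a \<in> G1" "b \<in> J2"
    then show "a * b \<in> J2" using J1(4) J1J2(4) unfolding submodule_def by blast
  qed
  moreover have "J \<in> GV D"
  proof -
    have JD: "J \<subseteq> D" using \<open>J \<subseteq> J1\<close> J1J2 by blast
    have "frac_inv D J = D"
    proof
      show "D \<subseteq> frac_inv D J" using JD Dp(4) unfolding frac_inv_def by blast
      show "frac_inv D J \<subseteq> D"
      proof
        fix a assume "a \<in> frac_inv D J"
        then have h0: "\<forall>h\<in>H. a * h \<in> D" unfolding J_def fi_lspan[OF dom] .
        have "\<forall>g1\<in>G1. a * g1 \<in> D"
        proof
          fix g1 assume g1: "g1 \<in> G1"
          have "\<forall>g2\<in>G2. (a * g1) * g2 \<in> D"
          proof
            fix g2 assume "g2 \<in> G2"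
            then have "g1 * g2 \<in> H" unfolding H_def using g1 by blast
            then show "(a * g1) * g2 \<in> D" using h0 by (simp add: mult.assoc)
          qed
          then have "a * g1 \<in> frac_inv D J2" using G2(3) fi_lspan[OF dom] by simp
          then show "a * g1 \<in> D" using GV_fi[OF dom J2] by simp
        qed
        then have "a \<in> frac_inv D J1" using J1(2) fi_lspan[OF dom] by simp
        then show "a \<in> D" using GV_fi[OF dom J1(1)] by simp
      qed
    qed
    then have "v_closure D J = D" unfolding v_closure_def using fi_D[OF dom] by simp
    moreover have "is_ideal D J" unfolding is_ideal_def using JD lspanD_sub[OF dom] J_def by blast
    moreover have "\<exists>F. finite F \<and> F \<subseteq> D \<and> J = lspan D (*) F" using fH HD J_def by (intro exI[of _ H]) simp
    ultimately show ?thesis unfolding GV_def mem_Collect_eq by (intro conjI)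
  qed
  ultimately show ?thesis using JP by blast
qed

lemma GV_fin:
  assumes dom: "domain_with_qf D" and "finite F" "\<forall>f\<in>F. \<exists>J\<in>GV D. Q f J"
    and mono: "\<And>f J J'. Q f J \<Longrightarrow> J' \<subseteq> J \<Longrightarrow> Q f J'"
  shows "\<exists>J\<in>GV D. \<forall>f\<in>F. Q f J"
  using assms(2,3)
proof (induction F rule: finite_induct)
  case empty then show ?case using GV_D[OF dom] by blast
next
  case (insert x F)
  have "\<forall>f\<in>F. \<exists>J\<in>GV D. Q f J" using insert.prems by simp
  then obtain J1 where J1: "J1 \<in> GV D" "\<forall>f\<in>F. Q f J1" using insert.IH by meson
  have "\<exists>J\<in>GV D. Q x J" using insert.prems by simp
  then obtain J2 where J2: "J2 \<in> GV D" "Q x J2" by blast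
  obtain G1 where "finite G1" "G1 \<subseteq> D" "J1 = lspan D (*) G1" using GV_props[OF J1(1)] by blast
  from GV_prod[OF dom J1(1) this(3,1,2) J2(1)]
  obtain J where J: "J \<in> GV D" "J \<subseteq> J1" "J \<subseteq> J2" by blast
  have "Q x J" using mono[OF J2(2) J(3)] .
  moreover have "\<forall>f\<in>F. Q f J" using mono[OF _ J(2)] J1(2) by blast
  ultimately have "\<forall>f\<in>insert x F. Q f J" by blast
  then show ?case using J(1) by blast
qed



lemma ann_sub:
  assumes dom: "domain_with_qf D" and vs: "vector_space sc" and N: "submodule D sc N"
  shows "submodule D (*) {j. sc j x \<in> N}"
  unfolding submodule_def
proof (intro conjI ballI)
  show "0 \<in> {j. sc j x \<in> N}" using N vs_facts(5)[OF vs] unfolding submodule_def by simp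
  fix a b assume "a \<in> {j. sc j x \<in> N}" "b \<in> {j. sc j x \<in> N}"
  then show "a + b \<in> {j. sc j x \<in> N}" using N vs_facts(2)[OF vs] unfolding submodule_def by simp
next
  fix a b assume "a \<in> D" "b \<in> {j. sc j x \<in> N}"
  then have "sc a (sc b x) \<in> N" using N unfolding submodule_def by blast
  then show "a * b \<in> {j. sc j x \<in> N}" using vs_facts(3)[OF vs] by simp
qed

lemma spanU_sub:
  assumes vs: "vector_space sc"
  shows "submodule D sc (lspan UNIV sc S)"
  using submodule_weaken[OF lspan_sub[OF vs, of UNIV]] by blast

lemma W_sup:
  assumes dom: "domain_with_qf D" and vs: "vector_space sc" and N: "submodule D sc N"
  shows "N \<subseteq> w_closure D sc N"
proof
  fix x assume x: "x \<in> N"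
  then have "x \<in> lspan UNIV sc N" using lspan_sup[OF vs, of UNIV N] by blast
  moreover have "\<forall>j\<in>D. sc j x \<in> N" using N x unfolding submodule_def by blast
  ultimately show "x \<in> w_closure D sc N" unfolding w_closure_def using GV_D[OF dom] by blast
qed

lemma W_mono: "N1 \<subseteq> N2 \<Longrightarrow> w_closure D sc N1 \<subseteq> w_closure D sc N2"
  unfolding w_closure_def using lspan_mono[of N1 N2 UNIV sc] by blast

lemma W_span: "w_closure D sc N \<subseteq> lspan UNIV sc N"
  unfolding w_closure_def by blast

lemma W_sub:
  assumes dom: "domain_with_qf D" and vs: "vector_space sc" and N: "submodule D sc N"
  shows "submodule D sc (w_closure D sc N)"
proof -
  have sp: "submodule UNIV sc (lspan UNIV sc N)" by (rule spanU_sub[OF vs])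
  have Nadd: "u + v \<in> N" if "u \<in> N" "v \<in> N" for u v using N that unfolding submodule_def by blast
  have Nsc: "sc a u \<in> N" if "a \<in> D" "u \<in> N" for a u using N that unfolding submodule_def by blast
  show ?thesis unfolding submodule_def
  proof (intro conjI ballI)
    have "0 \<in> lspan UNIV sc N" using sp unfolding submodule_def by blast
    moreover have "\<forall>j\<in>D. sc j 0 \<in> N" using N vs_facts(6)[OF vs] unfolding submodule_def by simp
    ultimately show "0 \<in> w_closure D sc N" unfolding w_closure_def using GV_D[OF dom] by blast
  next
    fix x y assume x: "x \<in> w_closure D sc N" and y: "y \<in> w_closure D sc N"
    then obtain J1 where J1: "J1 \<in> GV D" "\<forall>j\<in>J1. sc j x \<in> N" unfolding w_closure_def by blast
    obtain J2 where J2: "J2 \<in> GV D" "\<forall>j\<in>J2. sc j y \<in> N" using y unfolding w_closure_def by blast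
    obtain G1 where G1: "finite G1" "G1 \<subseteq> D" "J1 = lspan D (*) G1" using GV_props[OF J1(1)] by blast
    from GV_prod[OF dom J1(1) G1(3,1,2) J2(1)]
    obtain J where J': "J \<in> GV D" "J \<subseteq> J1" "J \<subseteq> J2" by blast
    have "\<forall>j\<in>J. sc j (x + y) \<in> N"
    proof
      fix j assume "j \<in> J"
      then have "sc j x \<in> N" "sc j y \<in> N" using J1 J2 J' by blast+
      then show "sc j (x + y) \<in> N" using Nadd vs_facts(1)[OF vs] by simp
    qed
    moreover have "x \<in> lspan UNIV sc N" "y \<in> lspan UNIV sc N" using x y W_span[of D sc N] by blast+
    then have "x + y \<in> lspan UNIV sc N" using sp unfolding submodule_def by blast
    ultimately show "x + y \<in> w_closure D sc N" unfolding w_closure_def using J'(1) by blast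
  next
    fix a x assume a: "a \<in> D" and x: "x \<in> w_closure D sc N"
    then obtain J where J: "J \<in> GV D" "\<forall>j\<in>J. sc j x \<in> N" unfolding w_closure_def by blast
    have "\<forall>j\<in>J. sc j (sc a x) \<in> N"
    proof
      fix j assume "j \<in> J"
      then have "sc a (sc j x) \<in> N" using J a Nsc by blast
      then show "sc j (sc a x) \<in> N" by (simp add: vs_facts(3)[OF vs] mult.commute)
    qed
    moreover have "x \<in> lspan UNIV sc N" using x W_span[of D sc N] by blast
    then have "sc a x \<in> lspan UNIV sc N" using sp unfolding submodule_def by blast
    ultimately show "sc a x \<in> w_closure D sc N" unfolding w_closure_def using J(1) by blast
  qed
qed

lemma W_idem:
  assumes dom: "domain_with_qf D" and vs: "vector_space sc" and N: "submodule D sc N"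
  shows "w_closure D sc (w_closure D sc N) = w_closure D sc N"
proof
  show "w_closure D sc N \<subseteq> w_closure D sc (w_closure D sc N)"
    by (rule W_sup[OF dom vs W_sub[OF dom vs N]])
next
  show "w_closure D sc (w_closure D sc N) \<subseteq> w_closure D sc N"
  proof
    fix x assume x: "x \<in> w_closure D sc (w_closure D sc N)"
    have "x \<in> lspan UNIV sc N"
      using x W_span[of D sc "w_closure D sc N"] lspan_mono[OF W_span[of D sc N], of UNIV sc] lspan_span[OF vs, of N]
      by blast
    obtain J where J: "J \<in> GV D" "\<forall>j\<in>J. sc j x \<in> w_closure D sc N" using x unfolding w_closure_def by blast
    obtain G where G: "finite G" "G \<subseteq> D" "J = lspan D (*) G" using GV_props[OF J(1)] by blast
    have GJ: "G \<subseteq> J" using G lspan_sup[OF vs_mult, of D G] D_props[OF dom] by blast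
    have "\<forall>g\<in>G. \<exists>J'\<in>GV D. \<forall>j\<in>J'. sc j (sc g x) \<in> N" using J GJ unfolding w_closure_def by blast
    then obtain J' where J': "J' \<in> GV D" "\<forall>g\<in>G. \<forall>j\<in>J'. sc j (sc g x) \<in> N"
      using GV_fin[OF dom G(1), of "\<lambda>g J'. \<forall>j\<in>J'. sc j (sc g x) \<in> N"] by blast
    obtain J'' where J'': "J'' \<in> GV D" "\<forall>P. submodule D (*) P \<longrightarrow> (\<forall>a\<in>G. \<forall>b\<in>J'. a * b \<in> P) \<longrightarrow> J'' \<subseteq> P"
      using GV_prod[OF dom J(1) G(3,1,2) J'(1)] by blast
    have "J'' \<subseteq> {j. sc j x \<in> N}"
    proof (rule J''(2)[rule_format, OF ann_sub[OF dom vs N]])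
      fix a b assume "a \<in> G" "b \<in> J'"
      then have "sc b (sc a x) \<in> N" using J' by blast
      then show "a * b \<in> {j. sc j x \<in> N}" by (simp add: vs_facts[OF vs] mult.commute)
    qed
    then show "x \<in> w_closure D sc N" unfolding w_closure_def using J''(1) \<open>x \<in> lspan UNIV sc N\<close> by blast
  qed
qed

lemma chain_fin:
  assumes "finite F" "F \<subseteq> \<Union>C" "C \<noteq> {}" "\<forall>A\<in>C. \<forall>B\<in>C. A \<subseteq> B \<or> B \<subseteq> A"
  shows "\<exists>A\<in>C. F \<subseteq> A"
  using assms(1,2)
proof (induction F rule: finite_induct)
  case empty then show ?case using assms(3) by blast
next
  case (insert x F)
  then obtain A where A: "A \<in> C" "F \<subseteq> A" by blast
  obtain B where B: "B \<in> C" "x \<in> B" using insert by blast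
  from assms(4) A(1) B(1) have "A \<subseteq> B \<or> B \<subseteq> A" by blast
  then show ?case
  proof
    assume "A \<subseteq> B" then show ?case using A B by blast
  next
    assume "B \<subseteq> A" then show ?case using A B by blast
  qed
qed

lemma W_chain:
  assumes dom: "domain_with_qf D" and vs: "vector_space sc" and C: "C \<noteq> {}"
    "\<forall>A\<in>C. \<forall>B\<in>C. A \<subseteq> B \<or> B \<subseteq> A" and mods: "\<forall>A\<in>C. submodule D sc A \<and> w_module D sc A"
  shows "submodule D sc (\<Union>C)" "w_module D sc (\<Union>C)"
proof -
  show sU: "submodule D sc (\<Union>C)" unfolding submodule_def
  proof (intro conjI ballI)
    obtain A0 where "A0 \<in> C" using C(1) by blast
    then have "0 \<in> A0" using mods unfolding submodule_def by blast
    then show "0 \<in> \<Union>C" using \<open>A0 \<in> C\<close> by blast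
  next
    fix x y assume "x \<in> \<Union>C" "y \<in> \<Union>C"
    then have "{x, y} \<subseteq> \<Union>C" by blast
    from chain_fin[OF _ this C(1) C(2)] obtain A where A: "A \<in> C" "{x, y} \<subseteq> A" by blast
    then have "x + y \<in> A" using mods unfolding submodule_def by blast
    then show "x + y \<in> \<Union>C" using A(1) by blast
  next
    fix a x assume a: "a \<in> D" and "x \<in> \<Union>C"
    then obtain A where A: "A \<in> C" "x \<in> A" by blast
    then have "sc a x \<in> A" using mods a unfolding submodule_def by blast
    then show "sc a x \<in> \<Union>C" using A(1) by blast
  qed
  have "w_closure D sc (\<Union>C) \<subseteq> \<Union>C"
  proof
    fix x assume x: "x \<in> w_closure D sc (\<Union>C)"
    then have "x \<in> lspan UNIV sc (\<Union>C)" using W_span[of D sc "\<Union>C"] by blast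
    from lspan_finite[OF this] obtain F where F: "finite F" "F \<subseteq> \<Union>C" "x \<in> lspan UNIV sc F" by blast
    obtain J where J: "J \<in> GV D" "\<forall>j\<in>J. sc j x \<in> \<Union>C" using x unfolding w_closure_def by blast
    obtain G where G: "finite G" "G \<subseteq> D" "J = lspan D (*) G" using GV_props[OF J(1)] by blast
    have GJ: "G \<subseteq> J" using G(3) lspan_sup[OF vs_mult D_props(2)[OF dom], of G] by simp
    have fin: "finite (F \<union> (\<lambda>g. sc g x) ` G)" using F(1) G(1) by simp
    have sub: "F \<union> (\<lambda>g. sc g x) ` G \<subseteq> \<Union>C" using F(2) GJ J(2) by blast
    from chain_fin[OF fin sub C(1) C(2)] obtain A where A: "A \<in> C" "F \<union> (\<lambda>g. sc g x) ` G \<subseteq> A" by blast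
    have sA: "submodule D sc A" "w_module D sc A" using mods A(1) by auto
    have "G \<subseteq> {j. sc j x \<in> A}" using A(2) by blast
    then have "J \<subseteq> {j. sc j x \<in> A}" unfolding G(3) by (rule lspan_least[OF ann_sub[OF dom vs sA(1)]])
    moreover have "x \<in> lspan UNIV sc A" using F(3) A(2) lspan_mono[of F A UNIV sc] by blast
    ultimately have "x \<in> w_closure D sc A" unfolding w_closure_def using J(1) by blast
    then show "x \<in> \<Union>C" using sA(2) A(1) unfolding w_module_def by blast
  qed
  then show "w_module D sc (\<Union>C)" unfolding w_module_def using W_sup[OF dom vs sU] by blast
qed



lemma WI_D:
  assumes dom: "domain_with_qf D" and I: "is_ideal D I"
  shows "w_closure D (*) I \<subseteq> D"
proof
  fix x assume "x \<in> w_closure D (*) I"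
  then obtain J where J: "J \<in> GV D" "\<forall>j\<in>J. j * x \<in> I" unfolding w_closure_def by blast
  have "\<forall>j\<in>J. x * j \<in> D" using J I unfolding is_ideal_def by (auto simp: mult.commute)
  then have "x \<in> frac_inv D J" unfolding frac_inv_def by blast
  then show "x \<in> D" using GV_fi[OF dom J(1)] by simp
qed

lemma WI:
  assumes dom: "domain_with_qf D" and I: "is_ideal D I"
  shows "w_ideal D (w_closure D (*) I)"
proof -
  have sI: "submodule D (*) I" using I unfolding is_ideal_def by blast
  show ?thesis unfolding w_ideal_def is_ideal_def w_module_def
    using WI_D[OF dom I] W_sub[OF dom vs_mult sI] W_idem[OF dom vs_mult sI] by blast
qed

lemma one_notin:
  assumes dom: "domain_with_qf D" and I: "is_ideal D I" "I \<noteq> D"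
  shows "1 \<notin> I"
proof
  assume "1 \<in> I"
  then have "\<forall>d\<in>D. d * 1 \<in> I" using I unfolding is_ideal_def submodule_def by blast
  then have "D \<subseteq> I" by auto
  then show False using I unfolding is_ideal_def by blast
qed

lemma zero_w_ideal:
  assumes dom: "domain_with_qf D"
  shows "w_ideal D {0}" "{0} \<noteq> D"
proof -
  note Dp = D_props[OF dom]
  show "{0} \<noteq> D" using Dp(2) by auto
  have s0: "submodule D (*) {0}" unfolding submodule_def by simp
  have s0U: "submodule UNIV (*) {0::'a}" unfolding submodule_def by simp
  have "w_closure D (*) {0} \<subseteq> {0}"
    using W_span[of D "(*)" "{0}"] lspan_least[OF s0U, of "{0}"] by blast
  then have "w_module D (*) {0}" unfolding w_module_def using W_sup[OF dom vs_mult s0] by blast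
  then show "w_ideal D {0}" unfolding w_ideal_def is_ideal_def using s0 Dp(1) by blast
qed

lemma zorn_max:
  assumes dom: "domain_with_qf D" and A: "w_ideal D A" "A \<noteq> D"
  shows "\<exists>m. maximal_w_ideal D m \<and> A \<subseteq> m"
proof -
  define \<A> where "\<A> = {I. w_ideal D I \<and> I \<noteq> D \<and> A \<subseteq> I}"
  have ne: "\<A> \<noteq> {}" using A unfolding \<A>_def by blast
  have "\<exists>M\<in>\<A>. \<forall>X\<in>\<A>. M \<subseteq> X \<longrightarrow> X = M"
  proof (rule subset_Zorn_nonempty[OF ne])
    fix C assume C: "C \<noteq> {}" "subset.chain \<A> C"
    then have CA: "C \<subseteq> \<A>" and ch: "\<forall>X\<in>C. \<forall>Y\<in>C. X \<subseteq> Y \<or> Y \<subseteq> X" unfolding subset_chain_def by auto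
    have mods: "\<forall>X\<in>C. submodule D (*) X \<and> w_module D (*) X"
      using CA unfolding \<A>_def w_ideal_def is_ideal_def by blast
    have sU: "submodule D (*) (\<Union>C)" "w_module D (*) (\<Union>C)"
      using W_chain[OF dom vs_mult C(1) ch mods] by auto
    have UD: "\<Union>C \<subseteq> D" using CA unfolding \<A>_def w_ideal_def is_ideal_def by blast
    have "\<forall>X\<in>C. 1 \<notin> X" using CA one_notin[OF dom] unfolding \<A>_def w_ideal_def by blast
    then have "\<Union>C \<noteq> D" using D_props(2)[OF dom] by blast
    moreover have "A \<subseteq> \<Union>C" using C(1) CA unfolding \<A>_def by blast
    ultimately show "\<Union>C \<in> \<A>" unfolding \<A>_def w_ideal_def is_ideal_def using sU UD by blast
  qed
  then obtain M where M: "M \<in> \<A>" "\<forall>X\<in>\<A>. M \<subseteq> X \<longrightarrow> X = M" by blast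
  have "maximal_w_ideal D M" unfolding maximal_w_ideal_def
  proof (intro conjI allI impI)
    show "w_ideal D M" "M \<noteq> D" using M(1) unfolding \<A>_def by auto
    fix I assume "w_ideal D I \<and> I \<noteq> D \<and> M \<subseteq> I"
    then have "I \<in> \<A>" "M \<subseteq> I" using M(1) unfolding \<A>_def by auto
    then show "I = M" using M(2) by blast
  qed
  then show ?thesis using M(1) unfolding \<A>_def by blast
qed

lemma max_prime:
  assumes dom: "domain_with_qf D" and m: "maximal_w_ideal D m"
  shows "prime_w_ideal D m"
  unfolding prime_w_ideal_def
proof (intro conjI ballI impI)
  note Dp = D_props[OF dom]
  show wm: "w_ideal D m" and mD: "m \<noteq> D" using m unfolding maximal_w_ideal_def by auto
  have im: "is_ideal D m" and sm: "submodule D (*) m" and wmm: "w_closure D (*) m = m" and mD': "m \<subseteq> D"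
    using wm unfolding w_ideal_def is_ideal_def w_module_def by auto
  fix a b assume ab: "a \<in> D" "b \<in> D" "a * b \<in> m"
  show "a \<in> m \<or> b \<in> m"
  proof (cases "a \<in> m")
    case True then show ?thesis by blast
  next
    case False
    note am = False
    define I0 where "I0 = lspan D (*) (insert a m)"
    have I0D: "I0 \<subseteq> D" unfolding I0_def using D_sub[OF dom] ab mD' by (intro lspan_least) auto
    have iI0: "is_ideal D I0" unfolding is_ideal_def using I0D lspanD_sub[OF dom] I0_def by blast
    have sI0: "submodule D (*) I0" using iI0 unfolding is_ideal_def by blast
    define I where "I = w_closure D (*) I0"
    have wI: "w_ideal D I" unfolding I_def by (rule WI[OF dom iI0])
    have "insert a m \<subseteq> I0" unfolding I0_def using lspan_sup[OF vs_mult Dp(2)] by blast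
    then have aI: "insert a m \<subseteq> I" unfolding I_def using W_sup[OF dom vs_mult sI0] by blast
    have "I = D"
    proof (rule ccontr)
      assume "I \<noteq> D"
      then have "I = m" using m wI aI unfolding maximal_w_ideal_def by blast
      then show False using aI am by blast
    qed
    then have "1 \<in> I" using Dp(2) by simp
    then obtain J where J: "J \<in> GV D" "\<forall>j\<in>J. j * 1 \<in> I0" unfolding I_def w_closure_def by blast
    have "b = 0 \<or> b \<in> m"
    proof (cases "b = 0")
      case False
      have "0 \<in> m" using sm unfolding submodule_def by blast
      then have a0: "a \<noteq> 0" using am by auto
      then have z: "a * b \<noteq> 0" using False by simp
      have "b = (b / (a * b)) * (a * b)" using z by simp
      moreover have "finite {a * b} \<and> {a * b} \<subseteq> m \<and> (\<forall>y\<in>{a * b}. (\<lambda>_. b / (a * b)) y \<in> (UNIV::'a set))"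
        using ab by simp
      ultimately have bspan: "b \<in> lspan UNIV (*) m" unfolding lspan_def mem_Collect_eq
        by (intro exI[of _ "{a * b}"] exI[of _ "\<lambda>_. b / (a * b)"]) auto
      have sub: "submodule D (*) {j. j * b \<in> m}" by (rule ann_sub[OF dom vs_mult sm])
      have "insert a m \<subseteq> {j. j * b \<in> m}"
      proof
        fix y assume "y \<in> insert a m"
        then show "y \<in> {j. j * b \<in> m}"
        proof
          assume "y = a" then show ?thesis using ab by simp
        next
          assume "y \<in> m" then have "b * y \<in> m" using sm ab unfolding submodule_def by blast
          then show ?thesis by (simp add: mult.commute)
        qed
      qed
      then have "I0 \<subseteq> {j. j * b \<in> m}" unfolding I0_def by (rule lspan_least[OF sub])
      then have "\<forall>j\<in>J. j * b \<in> m" using J by auto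
      then have "b \<in> w_closure D (*) m" unfolding w_closure_def using J(1) bspan by blast
      then show ?thesis using wmm by simp
    qed simp
    then have "b \<in> m" using sm unfolding submodule_def by auto
    then show ?thesis by blast
  qed
qed



lemma lspanDsc_sub:
  assumes dom: "domain_with_qf D" and vs: "vector_space sc"
  shows "submodule D sc (lspan D sc S)"
  by (rule lspan_sub[OF vs D_props(1)[OF dom] D_props(3)[OF dom] D_props(4)[OF dom]])

lemma cl_props:
  assumes dom: "domain_with_qf D" and vs: "vector_space sc"
    and L: "submodule D sc L" "w_module D sc L" and F: "F \<subseteq> L"
  shows "w_closure D sc (lspan D sc F) \<subseteq> L" "submodule D sc (w_closure D sc (lspan D sc F))"
    "w_module D sc (w_closure D sc (lspan D sc F))" "F \<subseteq> w_closure D sc (lspan D sc F)"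
proof -
  have s: "submodule D sc (lspan D sc F)" by (rule lspanDsc_sub[OF dom vs])
  have "lspan D sc F \<subseteq> L" by (rule lspan_least[OF L(1) F])
  then have "w_closure D sc (lspan D sc F) \<subseteq> w_closure D sc L" by (rule W_mono)
  then show "w_closure D sc (lspan D sc F) \<subseteq> L" using L(2) unfolding w_module_def by simp
  show "submodule D sc (w_closure D sc (lspan D sc F))" by (rule W_sub[OF dom vs s])
  show "w_module D sc (w_closure D sc (lspan D sc F))" unfolding w_module_def by (rule W_idem[OF dom vs s])
  have "F \<subseteq> lspan D sc F" by (rule lspan_sup[OF vs D_props(2)[OF dom]])
  then show "F \<subseteq> w_closure D sc (lspan D sc F)" using W_sup[OF dom vs s] by blast
qed

lemma SM_wfinite:
  assumes dom: "domain_with_qf D" and vs: "vector_space sc"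
    and SM: "SM_module D sc M" and L: "w_submodule D sc M L"
  shows "\<exists>F. finite F \<and> F \<subseteq> L \<and> w_closure D sc (lspan D sc F) = L"
proof (rule ccontr)
  assume nf: "\<not> ?thesis"
  have Ls: "submodule D sc L" "L \<subseteq> M" "w_module D sc L" using L unfolding w_submodule_def by auto
  note clp = cl_props[OF dom vs Ls(1) Ls(3)]
  have ex: "\<exists>y. y \<in> L \<and> y \<notin> w_closure D sc (lspan D sc F)" if "finite F" "F \<subseteq> L" for F
  proof -
    have "w_closure D sc (lspan D sc F) \<subseteq> L" using clp(1)[OF that(2)] .
    moreover have "w_closure D sc (lspan D sc F) \<noteq> L" using nf that by blast
    ultimately show ?thesis by blast
  qed
  define g where "g F = (SOME y. y \<in> L \<and> y \<notin> w_closure D sc (lspan D sc F))" for F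
  have g: "g F \<in> L \<and> g F \<notin> w_closure D sc (lspan D sc F)" if "finite F" "F \<subseteq> L" for F
    unfolding g_def by (rule someI_ex[OF ex[OF that]])
  define Fs where "Fs n = ((\<lambda>F. insert (g F) F) ^^ n) {}" for n
  have FsS: "Fs (Suc n) = insert (g (Fs n)) (Fs n)" for n unfolding Fs_def by simp
  have Fsp: "finite (Fs n) \<and> Fs n \<subseteq> L" for n
  proof (induction n)
    case 0 then show ?case unfolding Fs_def by simp
  next
    case (Suc n)
    have "g (Fs n) \<in> L" using g[of "Fs n"] Suc.IH by blast
    then show ?case using FsS[of n] Suc.IH by simp
  qed
  define f where "f n = w_closure D sc (lspan D sc (Fs n))" for n
  have fw: "w_submodule D sc M (f n)" for n
  proof -
    have "Fs n \<subseteq> L" using Fsp[of n] by blast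
    note c = clp(1-3)[OF this]
    show ?thesis unfolding w_submodule_def f_def using c Ls(2) by blast
  qed
  have fm: "f n \<subseteq> f (Suc n)" for n
  proof -
    have "Fs n \<subseteq> Fs (Suc n)" using FsS[of n] by blast
    then show ?thesis unfolding f_def by (intro W_mono lspan_mono)
  qed
  have fA: "(\<forall>n. w_submodule D sc M (f n)) \<and> (\<forall>n. f n \<subseteq> f (Suc n))" using fw fm by blast
  have fB: "\<forall>f :: nat \<Rightarrow> _. (\<forall>n. w_submodule D sc M (f n)) \<and> (\<forall>n. f n \<subseteq> f (Suc n)) \<longrightarrow>
        (\<exists>n. \<forall>m\<ge>n. f m = f n)" using SM unfolding SM_module_def by (rule conjunct2)
  have "\<exists>n. \<forall>m\<ge>n. f m = f n" by (rule fB[rule_format, OF fA])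
  then obtain n where n: "\<forall>m\<ge>n. f m = f n" by blast
  have "g (Fs n) \<in> Fs (Suc n)" using FsS by simp
  moreover have "Fs (Suc n) \<subseteq> f (Suc n)" unfolding f_def using clp(4) Fsp[of "Suc n"] by blast
  ultimately have "g (Fs n) \<in> f (Suc n)" by blast
  moreover have "f (Suc n) = f n" by (rule n[rule_format]) simp
  ultimately have "g (Fs n) \<in> f n" by simp
  then show False using g[of "Fs n"] Fsp[of n] unfolding f_def by blast
qed

lemma wfinite_SM:
  assumes dom: "domain_with_qf D" and vs: "vector_space sc" and M: "w_module D sc M" "submodule D sc M"
    and H: "\<And>L. w_submodule D sc M L \<Longrightarrow> \<exists>F. finite F \<and> F \<subseteq> L \<and> L \<subseteq> w_closure D sc (lspan D sc F)"
  shows "SM_module D sc M"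
  unfolding SM_module_def
proof (intro conjI allI impI)
  show "w_module D sc M" by (rule M(1))
  fix f :: "nat \<Rightarrow> _" assume "(\<forall>n. w_submodule D sc M (f n)) \<and> (\<forall>n. f n \<subseteq> f (Suc n))"
  then have fw: "\<And>n. w_submodule D sc M (f n)" and fm: "\<And>n. f n \<subseteq> f (Suc n)" by auto
  have mono: "f a \<subseteq> f b" if "a \<le> b" for a b using lift_Suc_mono_le[of f, OF fm that] .
  have ch: "\<forall>A\<in>range f. \<forall>B\<in>range f. A \<subseteq> B \<or> B \<subseteq> A"
  proof (intro ballI)
    fix A B assume "A \<in> range f" "B \<in> range f"
    then obtain a b where "A = f a" "B = f b" by blast
    then show "A \<subseteq> B \<or> B \<subseteq> A" using mono[of a b] mono[of b a] nat_le_linear[of a b] by blast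
  qed
  have mods: "\<forall>A\<in>range f. submodule D sc A \<and> w_module D sc A" using fw unfolding w_submodule_def by blast
  have ne: "range f \<noteq> {}" by blast
  note U = W_chain[OF dom vs ne ch mods]
  have "\<Union>(range f) \<subseteq> M" using fw unfolding w_submodule_def by blast
  then have "w_submodule D sc M (\<Union>(range f))" unfolding w_submodule_def using U by blast
  from H[OF this] obtain F where F: "finite F" "F \<subseteq> \<Union>(range f)" "\<Union>(range f) \<subseteq> w_closure D sc (lspan D sc F)" by blast
  from chain_fin[OF F(1) F(2) ne ch] obtain A where A: "A \<in> range f" "F \<subseteq> A" by blast
  then obtain n where An: "A = f n" by blast
  have fn: "submodule D sc (f n)" "w_module D sc (f n)" using fw[of n] unfolding w_submodule_def by auto
  have "w_closure D sc (lspan D sc F) \<subseteq> f n" using cl_props(1)[OF dom vs fn, of F] A(2) An by blast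
  then have "\<Union>(range f) \<subseteq> f n" using F(3) by blast
  have "\<forall>m\<ge>n. f m = f n"
  proof (intro allI impI)
    fix m assume "n \<le> m"
    then have "f n \<subseteq> f m" by (rule mono)
    moreover have "f m \<subseteq> f n" using \<open>\<Union>(range f) \<subseteq> f n\<close> by blast
    ultimately show "f m = f n" by blast
  qed
  then show "\<exists>n. \<forall>m\<ge>n. f m = f n" by blast
qed



lemma loc_wfinite:
  assumes dom: "domain_with_qf D" and vs: "vector_space sc"
    and H: "\<forall>m. maximal_w_ideal D m \<longrightarrow> P_SM_module D sc m M" and L: "w_submodule D sc M L"
  shows "\<exists>F. finite F \<and> F \<subseteq> L \<and> L \<subseteq> w_closure D sc (lspan D sc F)"
proof -
  note Dp = D_props[OF dom]
  have Ls: "submodule D sc L" "L \<subseteq> M" "w_module D sc L" using L unfolding w_submodule_def by auto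
  let ?cl = "\<lambda>F. w_closure D sc (lspan D sc F)"
  define T where "T = {s. s \<in> D \<and> (\<exists>F0. finite F0 \<and> F0 \<subseteq> L \<and> sc s ` L \<subseteq> ?cl F0)}"
  have sT: "\<exists>s\<in>T. s \<notin> m" if m: "maximal_w_ideal D m" for m
  proof -
    have "S_w_finite D sc (D - m) M L" using H m L unfolding P_SM_module_def S_SM_module_def by blast
    then obtain s F0 where s: "s \<in> D - m" "finite F0" "F0 \<subseteq> M" "sc s ` L \<subseteq> ?cl F0" "?cl F0 \<subseteq> w_closure D sc L"
      unfolding S_w_finite_def by blast
    have s0: "submodule D sc (lspan D sc F0)" by (rule lspanDsc_sub[OF dom vs])
    have "F0 \<subseteq> lspan D sc F0" by (rule lspan_sup[OF vs Dp(2)])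
    then have "F0 \<subseteq> ?cl F0" using W_sup[OF dom vs s0] by blast
    then have "F0 \<subseteq> L" using s(5) Ls(3) unfolding w_module_def by blast
    then have "s \<in> T" unfolding T_def using s by blast
    then show ?thesis using s(1) by blast
  qed
  have TD: "T \<subseteq> D" unfolding T_def by blast
  define I0 where "I0 = lspan D (*) T"
  have I0D: "I0 \<subseteq> D" unfolding I0_def by (rule lspan_least[OF D_sub[OF dom] TD])
  have iI0: "is_ideal D I0" unfolding is_ideal_def using I0D lspanD_sub[OF dom] I0_def by blast
  have "w_closure D (*) I0 = D"
  proof (rule ccontr)
    assume "w_closure D (*) I0 \<noteq> D"
    from zorn_max[OF dom WI[OF dom iI0] this] obtain m where m: "maximal_w_ideal D m" "w_closure D (*) I0 \<subseteq> m" by blast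
    obtain s where "s \<in> T" "s \<notin> m" using sT[OF m(1)] by blast
    moreover have "T \<subseteq> I0" unfolding I0_def by (rule lspan_sup[OF vs_mult Dp(2)])
    moreover have "I0 \<subseteq> w_closure D (*) I0" using W_sup[OF dom vs_mult] iI0 unfolding is_ideal_def by blast
    ultimately show False using m(2) by blast
  qed
  then have "1 \<in> w_closure D (*) I0" using Dp(2) by simp
  then obtain J where J: "J \<in> GV D" "\<forall>j\<in>J. j * 1 \<in> I0" unfolding w_closure_def by blast
  then have JI0: "J \<subseteq> I0" by auto
  obtain G where G: "finite G" "G \<subseteq> D" "J = lspan D (*) G" using GV_props[OF J(1)] by blast
  have GJ: "G \<subseteq> J" using G(3) lspan_sup[OF vs_mult Dp(2), of G] by simp
  have "\<forall>g\<in>G. \<exists>Tg. finite Tg \<and> Tg \<subseteq> T \<and> g \<in> lspan D (*) Tg"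
  proof
    fix g assume "g \<in> G"
    then have "g \<in> lspan D (*) T" using GJ JI0 I0_def by blast
    then show "\<exists>Tg. finite Tg \<and> Tg \<subseteq> T \<and> g \<in> lspan D (*) Tg" by (rule lspan_finite)
  qed
  from bchoice[OF this] obtain tg where tg: "\<forall>g\<in>G. finite (tg g) \<and> tg g \<subseteq> T \<and> g \<in> lspan D (*) (tg g)"
    by blast
  obtain m0 where m0: "maximal_w_ideal D m0"
    using zorn_max[OF dom zero_w_ideal[OF dom]] by blast
  obtain s0 where s0: "s0 \<in> T" "s0 \<notin> m0" using sT[OF m0] by blast
  have "0 \<in> m0" using m0 unfolding maximal_w_ideal_def w_ideal_def is_ideal_def submodule_def by blast
  then have s0nz: "s0 \<noteq> 0" using s0 by auto
  define T' where "T' = insert s0 (\<Union>g\<in>G. tg g)"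
  have T'fin: "finite T'" unfolding T'_def using G(1) tg by simp
  have T'T: "T' \<subseteq> T" unfolding T'_def using tg s0 by blast
  have "G \<subseteq> lspan D (*) T'"
  proof
    fix g assume g: "g \<in> G"
    then have "tg g \<subseteq> T'" unfolding T'_def by blast
    then show "g \<in> lspan D (*) T'" using tg g lspan_mono[of "tg g" T' D "(*)"] by blast
  qed
  then have JT': "J \<subseteq> lspan D (*) T'" unfolding G(3) by (rule lspan_least[OF lspanD_sub[OF dom]])
  have "\<forall>t\<in>T'. \<exists>F0. finite F0 \<and> F0 \<subseteq> L \<and> sc t ` L \<subseteq> ?cl F0" using T'T unfolding T_def by blast
  from bchoice[OF this] obtain fF where fF: "\<forall>t\<in>T'. finite (fF t) \<and> fF t \<subseteq> L \<and> sc t ` L \<subseteq> ?cl (fF t)"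
    by blast
  define G' where "G' = (\<Union>t\<in>T'. fF t)"
  have G'fin: "finite G'" unfolding G'_def using T'fin fF by simp
  have G'L: "G' \<subseteq> L" unfolding G'_def using fF by blast
  define N where "N = ?cl G'"
  have sl: "submodule D sc (lspan D sc G')" by (rule lspanDsc_sub[OF dom vs])
  have sN: "submodule D sc N" unfolding N_def by (rule W_sub[OF dom vs sl])
  have clt: "?cl (fF t) \<subseteq> N" if "t \<in> T'" for t
  proof -
    have "fF t \<subseteq> G'" unfolding G'_def using that by blast
    then show ?thesis unfolding N_def by (intro W_mono lspan_mono)
  qed
  have "L \<subseteq> N"
  proof
    fix x assume x: "x \<in> L"
    have "T' \<subseteq> {j. sc j x \<in> N}"
    proof
      fix t assume t: "t \<in> T'"
      then have "sc t x \<in> ?cl (fF t)" using fF x by blast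
      then show "t \<in> {j. sc j x \<in> N}" using clt[OF t] by blast
    qed
    then have "lspan D (*) T' \<subseteq> {j. sc j x \<in> N}" by (rule lspan_least[OF ann_sub[OF dom vs sN]])
    then have Jx: "\<forall>j\<in>J. sc j x \<in> N" using JT' by blast
    have s0T': "s0 \<in> T'" unfolding T'_def by blast
    then have "sc s0 x \<in> ?cl (fF s0)" using fF x by blast
    then have "sc s0 x \<in> N" using clt[OF s0T'] by blast
    then have "sc s0 x \<in> lspan UNIV sc N" using lspan_sup[OF vs, of UNIV N] by blast
    then have "sc (inverse s0) (sc s0 x) \<in> lspan UNIV sc N"
      using spanU_sub[OF vs, of UNIV N] unfolding submodule_def by blast
    moreover have "sc (inverse s0) (sc s0 x) = x" using s0nz vs_facts(3,4)[OF vs] by simp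
    ultimately have "x \<in> lspan UNIV sc N" by simp
    then have "x \<in> w_closure D sc N" unfolding w_closure_def using J(1) Jx by blast
    then show "x \<in> N" unfolding N_def using W_idem[OF dom vs sl] by simp
  qed
  then show ?thesis unfolding N_def using G'fin G'L by blast
qed

theorem proposition3p4:
  fixes D :: "'k::field set" and sc :: "'k \<Rightarrow> 'v::ab_group_add \<Rightarrow> 'v" and M :: "'v set"
  assumes "domain_with_qf D"
    and "vector_space sc"
    and "submodule D sc M"
    and "w_module D sc M"
  shows "(SM_module D sc M \<longleftrightarrow> (\<forall>P. prime_w_ideal D P \<longrightarrow> P_SM_module D sc P M))
       \<and> (SM_module D sc M \<longleftrightarrow> (\<forall>m. maximal_w_ideal D m \<longrightarrow> P_SM_module D sc m M))"
proof -
  note dom = assms(1) and vs = assms(2)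
  have i12: "\<forall>P. prime_w_ideal D P \<longrightarrow> P_SM_module D sc P M" if SM: "SM_module D sc M"
  proof (intro allI impI)
    fix P assume P: "prime_w_ideal D P"
    then have "is_ideal D P" "P \<noteq> D" unfolding prime_w_ideal_def w_ideal_def by auto
    then have one: "1 \<in> D - P" using one_notin[OF dom] D_props(2)[OF dom] by blast
    show "P_SM_module D sc P M" unfolding P_SM_module_def S_SM_module_def
    proof (intro allI impI)
      fix L assume L: "w_submodule D sc M L"
      have Ls: "submodule D sc L" "L \<subseteq> M" "w_module D sc L" using L unfolding w_submodule_def by auto
      obtain F where F: "finite F" "F \<subseteq> L" "w_closure D sc (lspan D sc F) = L"
        using SM_wfinite[OF dom vs SM L] by blast
      have "sc 1 ` L = L" using vs_facts(4)[OF vs] by simp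
      moreover have "L \<subseteq> w_closure D sc L" by (rule W_sup[OF dom vs Ls(1)])
      ultimately show "S_w_finite D sc (D - P) M L" unfolding S_w_finite_def
        using one F Ls(2) by (intro bexI[of _ 1] exI[of _ F]) auto
    qed
  qed
  have i23: "\<forall>m. maximal_w_ideal D m \<longrightarrow> P_SM_module D sc m M"
    if "\<forall>P. prime_w_ideal D P \<longrightarrow> P_SM_module D sc P M"
    using that max_prime[OF dom] by blast
  have i31: "SM_module D sc M" if H: "\<forall>m. maximal_w_ideal D m \<longrightarrow> P_SM_module D sc m M"
    by (rule wfinite_SM[OF dom vs assms(4) assms(3) loc_wfinite[OF dom vs H]])
  show ?thesis using i12 i23 i31 by blast
qed

end
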